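(* A graph $G$ has exactly one L-Grundy dominating set (i.e., is a unique L-Grundy domination graph) if and only if $\gamma_{gr}^{L}(G)=n(G)$, where $n(G)$ is the number of vertices of $G$.
   Context: For a graph $G$, $N(v)$ is the open neighborhood and $N[v]=N(v)\cup\{v\}$ the closed neighborhood of $v$. A sequence $(v_1,\ldots,v_k)$ of distinct vertices is an L-sequence if $N[v_i]\setminus\bigcup_{j=1}^{i-1}N(v_j)\neq\emptyset$ for each $i\in[k]$. The L-Grundy domination number $\gamma_{gr}^{L}(G)$ is the maximum length of an L-sequence; the vertex set of such a maximum-length L-sequence is an L-Grundy dominating set. *)

theory Defs
  imports Main
begin

definition simple_graph :: "'a set \<Rightarrow> ('a \<Rightarrow> 'a \<Rightarrow> bool) \<Rightarrow> bool" where
  "simple_graph V E \<longleftrightarrow> finite V \<and> (\<forall>u v. E u v \<longrightarrow> u \<in> V \<and> v \<in> V)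
     \<and> (\<forall>u v. E u v \<longrightarrow> E v u) \<and> (\<forall>v. \<not> E v v)"

definition open_nbhd :: "'a set \<Rightarrow> ('a \<Rightarrow> 'a \<Rightarrow> bool) \<Rightarrow> 'a \<Rightarrow> 'a set" where
  "open_nbhd V E v = {u \<in> V. E v u}"

definition closed_nbhd :: "'a set \<Rightarrow> ('a \<Rightarrow> 'a \<Rightarrow> bool) \<Rightarrow> 'a \<Rightarrow> 'a set" where
  "closed_nbhd V E v = insert v (open_nbhd V E v)"

definition L_sequence :: "'a set \<Rightarrow> ('a \<Rightarrow> 'a \<Rightarrow> bool) \<Rightarrow> 'a list \<Rightarrow> bool" where
  "L_sequence V E xs \<longleftrightarrow> distinct xs \<and> set xs \<subseteq> V \<and>
     (\<forall>i < length xs. closed_nbhd V E (xs ! i) - (\<Union>j<i. open_nbhd V E (xs ! j)) \<noteq> {})"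

definition L_grundy_number :: "'a set \<Rightarrow> ('a \<Rightarrow> 'a \<Rightarrow> bool) \<Rightarrow> nat" where
  "L_grundy_number V E = Max {length xs | xs. L_sequence V E xs}"

definition L_grundy_dominating_sets :: "'a set \<Rightarrow> ('a \<Rightarrow> 'a \<Rightarrow> bool) \<Rightarrow> 'a set set" where
  "L_grundy_dominating_sets V E =
     {set xs | xs. L_sequence V E xs \<and> length xs = L_grundy_number V E}"

end

theory Submission
  imports Defs
begin

lemma Lseq_len:
  assumes "simple_graph V E" "L_sequence V E xs"
  shows "length xs \<le> card V"
proof -
  have "finite V" using assms(1) by (simp add: simple_graph_def)
  moreover have "distinct xs" "set xs \<subseteq> V" using assms(2) by (auto simp: L_sequence_def)
  ultimately show ?thesis by (metis card_mono distinct_card)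
qed

lemma Lseq_max_exists:
  assumes "simple_graph V E"
  shows "\<exists>xs. L_sequence V E xs \<and> length xs = L_grundy_number V E"
proof -
  let ?L = "{length xs | xs. L_sequence V E xs}"
  have fin: "finite ?L"
    by (rule finite_subset[of _ "{..card V}"]) (auto dest: Lseq_len[OF assms])
  have "L_sequence V E []" by (simp add: L_sequence_def)
  hence ne: "?L \<noteq> {}" by blast
  have "Max ?L \<in> ?L" using Max_in[OF fin ne] .
  thus ?thesis unfolding L_grundy_number_def by auto
qed

lemma Lseq_le_max:
  assumes "simple_graph V E" "L_sequence V E xs"
  shows "length xs \<le> L_grundy_number V E"
proof -
  let ?L = "{length xs | xs. L_sequence V E xs}"
  have fin: "finite ?L"
    by (rule finite_subset[of _ "{..card V}"]) (auto dest: Lseq_len[OF assms(1)])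
  show ?thesis unfolding L_grundy_number_def using assms(2) fin by (auto intro: Max_ge)
qed

theorem corollary6p3:
  fixes V :: "'a set" and E :: "'a \<Rightarrow> 'a \<Rightarrow> bool"
  assumes "simple_graph V E"
  shows "(\<exists>!S. S \<in> L_grundy_dominating_sets V E) \<longleftrightarrow> L_grundy_number V E = card V"
proof
  assume U: "\<exists>!S. S \<in> L_grundy_dominating_sets V E"
  show "L_grundy_number V E = card V"
  proof (rule ccontr)
    assume ne: "L_grundy_number V E \<noteq> card V"
    obtain xs where xs: "L_sequence V E xs" "length xs = L_grundy_number V E"
      using Lseq_max_exists[OF assms] by blast
    have fin: "finite V" using assms by (simp add: simple_graph_def)
    have dxs: "distinct xs" and sxs: "set xs \<subseteq> V" using xs(1) by (auto simp: L_sequence_def)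
    have "set xs \<noteq> V"
    proof
      assume "set xs = V"
      hence "length xs = card V" using distinct_card[OF dxs] by simp
      thus False using ne xs(2) by simp
    qed
    then obtain u where u: "u \<in> V" "u \<notin> set xs" using sxs by blast
    define k where "k = length xs"
    let ?U = "\<lambda>n. \<Union>j<n. open_nbhd V E (xs ! j)"
    define P where "P n \<longleftrightarrow> closed_nbhd V E u \<subseteq> ?U n" for n
    have Pk: "P k"
    proof (rule ccontr)
      assume nP: "\<not> P k"
      have "L_sequence V E (xs @ [u])"
        unfolding L_sequence_def
      proof (intro conjI allI impI)
        show "distinct (xs @ [u])" using dxs u by simp
        show "set (xs @ [u]) \<subseteq> V" using sxs u by simp
        fix i assume i: "i < length (xs @ [u])"
        show "closed_nbhd V E ((xs @ [u]) ! i) - (\<Union>j<i. open_nbhd V E ((xs @ [u]) ! j)) \<noteq> {}"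
        proof (cases "i < k")
          case True
          have "(\<Union>j<i. open_nbhd V E ((xs @ [u]) ! j)) = ?U i"
            using True k_def by (auto simp: nth_append)
          thus ?thesis using True xs(1) k_def by (auto simp: L_sequence_def nth_append)
        next
          case False
          hence "i = k" using i k_def by simp
          moreover have "(\<Union>j<k. open_nbhd V E ((xs @ [u]) ! j)) = ?U k"
            using k_def by (auto simp: nth_append)
          ultimately show ?thesis using nP k_def by (auto simp: P_def nth_append)
        qed
      qed
      from Lseq_le_max[OF assms this] xs(2) show False by simp
    qed
    have nP0: "\<not> P 0" by (auto simp: P_def closed_nbhd_def)
    define n where "n = (LEAST n. P n)"
    have Pn: "P n" using Pk n_def by (metis LeastI)
    have nle: "n \<le> k" using Pk n_def by (simp add: Least_le)
    have n0: "n \<noteq> 0" using Pn nP0 by (metis)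
    define m where "m = n - 1"
    have mn: "n = Suc m" using n0 m_def by simp
    have mk: "m < k" using nle mn by simp
    have nPm: "\<not> P m" using n_def mn not_less_Least by (metis lessI)
    define ys where "ys = xs[m := u]"
    have lys: "length ys = k" by (simp add: ys_def k_def)
    have sys: "set ys = insert u (set xs - {xs ! m})"
      unfolding ys_def using dxs mk k_def by (simp add: set_update_distinct)
    have nth_ys: "\<And>j. ys ! j = (if j = m then u else xs ! j)"
      using mk k_def by (simp add: ys_def nth_list_update)
    have Lys: "L_sequence V E ys"
      unfolding L_sequence_def
    proof (intro conjI allI impI)
      show "distinct ys" unfolding ys_def using dxs u
        by (metis distinct_list_update set_update_distinct insertCI ys_def sys Diff_iff)
      show "set ys \<subseteq> V" using sys sxs u by auto
      fix i assume i: "i < length ys"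
      show "closed_nbhd V E (ys ! i) - (\<Union>j<i. open_nbhd V E (ys ! j)) \<noteq> {}"
      proof (cases "i \<le> m")
        case True
        have eq: "(\<Union>j<i. open_nbhd V E (ys ! j)) = ?U i"
          using True by (auto simp: nth_ys)
        show ?thesis
        proof (cases "i = m")
          case True
          thus ?thesis using eq nPm by (auto simp: P_def nth_ys)
        next
          case False
          thus ?thesis using eq xs(1) i lys k_def by (auto simp: L_sequence_def nth_ys)
        qed
      next
        case False
        hence im: "i > m" by simp
        obtain w where w: "w \<in> closed_nbhd V E (xs ! i)" "w \<notin> ?U i"
        proof -
          have "i < length xs" using i lys k_def by simp
          hence "closed_nbhd V E (xs ! i) - ?U i \<noteq> {}" using xs(1) by (simp add: L_sequence_def)
          thus ?thesis using that by blast
        qed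
        have "{..<n} \<subseteq> {..<i}" using im mn by auto
        hence "?U n \<subseteq> ?U i" by (rule UN_mono) simp
        moreover have "open_nbhd V E u \<subseteq> ?U n" using Pn unfolding P_def closed_nbhd_def by blast
        ultimately have "open_nbhd V E u \<subseteq> ?U i" by (rule order_trans[rotated])
        hence wu: "w \<notin> open_nbhd V E u" using w(2) by (meson subsetD)
        have "w \<notin> (\<Union>j<i. open_nbhd V E (ys ! j))"
        proof
          assume "w \<in> (\<Union>j<i. open_nbhd V E (ys ! j))"
          then obtain j where j: "j < i" "w \<in> open_nbhd V E (ys ! j)" by blast
          show False
          proof (cases "j = m")
            case True thus False using j wu by (simp add: nth_ys)
          next
            case False thus False using j w(2) by (simp add: nth_ys)
          qed
        qed
        moreover have "ys ! i = xs ! i" using im by (simp add: nth_ys)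
        ultimately show ?thesis using w(1) by (metis DiffI empty_iff)
      qed
    qed
    have "set ys \<in> L_grundy_dominating_sets V E"
      unfolding L_grundy_dominating_sets_def using Lys lys k_def xs(2) by (intro CollectI exI[of _ ys]) simp
    moreover have "set xs \<in> L_grundy_dominating_sets V E"
      using xs unfolding L_grundy_dominating_sets_def by auto
    moreover have "set ys \<noteq> set xs" using sys u by auto
    moreover obtain S0 where "\<And>T. T \<in> L_grundy_dominating_sets V E \<Longrightarrow> T = S0"
      using U by (metis ex1E)
    ultimately show False by metis
  qed
next
  assume eq: "L_grundy_number V E = card V"
  have fin: "finite V" using assms by (simp add: simple_graph_def)
  obtain xs where xs: "L_sequence V E xs" "length xs = L_grundy_number V E"
    using Lseq_max_exists[OF assms] by (elim exE conjE)
  have all: "S = V" if hS: "S \<in> L_grundy_dominating_sets V E" for S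
  proof -
    obtain ys where ys: "S = set ys" "L_sequence V E ys" "length ys = card V"
    proof -
      from hS obtain ys where "S = set ys" "L_sequence V E ys" "length ys = L_grundy_number V E"
        unfolding L_grundy_dominating_sets_def by (elim CollectE exE conjE)
      thus ?thesis using that eq by simp
    qed
    have "distinct ys" "set ys \<subseteq> V" using ys(2) by (auto simp: L_sequence_def)
    hence "card (set ys) = card V" using ys(3) by (simp add: distinct_card)
    thus ?thesis using ys(1) fin \<open>set ys \<subseteq> V\<close> by (simp add: card_subset_eq)
  qed
  have "set xs \<in> L_grundy_dominating_sets V E"
    using xs unfolding L_grundy_dominating_sets_def by auto
  thus "\<exists>!S. S \<in> L_grundy_dominating_sets V E" using all by (intro ex1I[of _ "set xs"]) auto
qed

end
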